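(* Let $s$ and $r$ be positive integers with $s\le r$, and let $\alpha_s=(4^s-1)^{1/s}$. Then the number $f_s(r)$ of $s$-bad pairs of binary vectors of length $r$ satisfies $$f_s(r)\le 2s\,4^{s-1}\alpha_s^{\,r}.$$
   Context: Let ${\mathbf e}_1,\ldots,{\mathbf e}_s$ denote the standard basis vectors of length $s$ (binary vectors with a single $1$) and $\mathbf{0}_s$ the zero vector of length $s$. A pair of binary vectors ${\mathbf x}=(x_0,\ldots,x_{r-1})$, ${\mathbf y}=(y_0,\ldots,y_{r-1})\in\{0,1\}^r$ is called $s$-good if for every $h=1,\ldots,s$ there exists at least one pair of indices $(i,j)$ with $0\le i,j\le r-s$ such that $(x_i,\ldots,x_{i+s-1})={\mathbf e}_h$, $(x_j,\ldots,x_{j+s-1})=\mathbf{0}_s$, $(y_i,\ldots,y_{i+s-1})=\mathbf{0}_s$ and $(y_j,\ldots,y_{j+s-1})={\mathbf e}_h$. A pair is $s$-bad if it is not $s$-good. Pairs are ordered pairs, counted among all $4^r$ pairs $({\mathbf x},{\mathbf y})$. *)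

theory Defs
  imports Complex_Main
begin

text \<open>Binary vectors of length r are lists of booleans (True = 1).
  The window of x of length s starting at index i is take s (drop i x).\<close>

definition window :: "bool list \<Rightarrow> nat \<Rightarrow> nat \<Rightarrow> bool list" where
  "window x i s = take s (drop i x)"

text \<open>Standard basis vector e_h of length s (h = 1..s): a single 1 at position h.\<close>
definition unit_vec :: "nat \<Rightarrow> nat \<Rightarrow> bool list" where
  "unit_vec s h = map (\<lambda>k. k = h - 1) [0..<s]"

definition zero_vec :: "nat \<Rightarrow> bool list" where
  "zero_vec s = replicate s False"

definition s_good :: "nat \<Rightarrow> bool list \<Rightarrow> bool list \<Rightarrow> bool" where
  "s_good s x y \<longleftrightarrow> length x = length y \<and>
     (\<forall>h\<in>{1..s}. \<exists>i j. i + s \<le> length x \<and> j + s \<le> length x \<and>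
        window x i s = unit_vec s h \<and> window x j s = zero_vec s \<and>
        window y i s = zero_vec s \<and> window y j s = unit_vec s h)"

definition s_bad :: "nat \<Rightarrow> bool list \<Rightarrow> bool list \<Rightarrow> bool" where
  "s_bad s x y \<longleftrightarrow> \<not> s_good s x y"

definition f :: "nat \<Rightarrow> nat \<Rightarrow> nat" where
  "f s r = card {(x, y). length x = r \<and> length y = r \<and> s_bad s x y}"

end

theory Submission
  imports Defs
begin

definition L :: "nat \<Rightarrow> bool list set" where "L n = {xs. length xs = n}"

lemma L_finite: "finite (L n)"
proof -
  have "L n = {xs. set xs \<subseteq> UNIV \<and> length xs = n}" by (auto simp: L_def)
  thus ?thesis using finite_lists_length_eq[of "UNIV::bool set" n] by simp
qed

lemma L_card: "card (L n) = 2 ^ n"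
proof -
  have "L n = {xs. set xs \<subseteq> UNIV \<and> length xs = n}" by (auto simp: L_def)
  thus ?thesis using card_lists_length_eq[of "UNIV::bool set" n] by simp
qed

definition S :: "nat \<Rightarrow> bool list \<Rightarrow> bool list \<Rightarrow> nat \<Rightarrow> nat \<Rightarrow> (bool list \<times> bool list) set" where
  "S s a b t n = {(x,y). length x = n*s+t \<and> length y = n*s+t \<and>
     (\<forall>k<n. \<not>(window x (k*s) s = a \<and> window y (k*s) s = b))}"

lemma S_finite: "finite (S s a b t n)"
proof -
  have "S s a b t n \<subseteq> L (n*s+t) \<times> L (n*s+t)" by (auto simp: S_def L_def)
  thus ?thesis using L_finite finite_subset by blast
qed

lemma block_count:
  assumes "length a = s" "length b = s"
  shows "card (S s a b t n) \<le> (4^s-1)^n * 4^t"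
proof (induction n)
  case 0
  have "S s a b t 0 = L t \<times> L t" by (auto simp: S_def L_def)
  hence "card (S s a b t 0) = 2^t * 2^t" by (simp add: L_card card_cartesian_product)
  also have "\<dots> = 4^t" by (simp add: power_mult_distrib[symmetric])
  finally show ?case by simp
next
  case (Suc n)
  define D where "D = (L s \<times> L s) - {(a,b)}"
  have cD: "card D = 4^s - 1"
  proof -
    have "(a,b) \<in> L s \<times> L s" using assms by (simp add: L_def)
    hence "card D = card (L s \<times> L s) - 1" unfolding D_def
      by (simp add: card_Diff_singleton L_finite)
    also have "card (L s \<times> L s) = 4^s" by (simp add: L_card card_cartesian_product power_mult_distrib[symmetric])
    finally show ?thesis .
  qed
  define g where "g = (\<lambda>(p::bool list \<times> bool list, q::bool list \<times> bool list). (fst p @ fst q, snd p @ snd q))"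
  have sub: "S s a b t (Suc n) \<subseteq> g ` (D \<times> S s a b t n)"
  proof
    fix z assume z: "z \<in> S s a b t (Suc n)"
    obtain x y where xy: "z = (x,y)" by (cases z)
    have lx: "length x = s + (n*s+t)" and ly: "length y = s + (n*s+t)"
      and nk: "\<And>k. k < Suc n \<Longrightarrow> \<not>(window x (k*s) s = a \<and> window y (k*s) s = b)"
      using z xy by (auto simp: S_def)
    have "(take s x, take s y) \<in> D"
      using nk[of 0] lx ly by (auto simp: D_def L_def window_def)
    moreover have "(drop s x, drop s y) \<in> S s a b t n"
    proof -
      have "\<And>k. k < n \<Longrightarrow> \<not>(window (drop s x) (k*s) s = a \<and> window (drop s y) (k*s) s = b)"
      proof -
        fix k assume "k < n"
        hence "Suc k < Suc n" by simp
        from nk[OF this] have "\<not>(window x (s + k*s) s = a \<and> window y (s + k*s) s = b)" by simp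
        thus "\<not>(window (drop s x) (k*s) s = a \<and> window (drop s y) (k*s) s = b)"
          by (simp add: window_def add.commute)
      qed
      thus ?thesis using lx ly by (simp add: S_def)
    qed
    moreover have "z = g ((take s x, take s y), (drop s x, drop s y))"
      by (simp add: g_def xy)
    ultimately show "z \<in> g ` (D \<times> S s a b t n)" by blast
  qed
  have fD: "finite D" unfolding D_def using L_finite by blast
  have "card (S s a b t (Suc n)) \<le> card (g ` (D \<times> S s a b t n))"
    using sub by (intro card_mono) (auto intro!: finite_imageI simp: fD S_finite)
  also have "\<dots> \<le> card (D \<times> S s a b t n)" by (rule card_image_le) (simp add: fD S_finite)
  also have "\<dots> = card D * card (S s a b t n)" by (simp add: card_cartesian_product)
  also have "\<dots> \<le> (4^s-1) * ((4^s-1)^n * 4^t)" using cD Suc.IH by simp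
  finally show ?case by (simp add: mult.assoc)
qed

lemma bad_sub:
  assumes "1 \<le> s"
  shows "{(x, y). length x = r \<and> length y = r \<and> s_bad s x y} \<subseteq>
    (\<Union>h\<in>{1..s}. S s (unit_vec s h) (zero_vec s) (r mod s) (r div s)
         \<union> S s (zero_vec s) (unit_vec s h) (r mod s) (r div s))"
proof
  fix z assume z: "z \<in> {(x, y). length x = r \<and> length y = r \<and> s_bad s x y}"
  obtain x y where xy: "z = (x,y)" by (cases z)
  have lx: "length x = r" and ly: "length y = r" and bad: "\<not> s_good s x y"
    using z xy by (auto simp: s_bad_def)
  have r: "r = (r div s) * s + r mod s" by simp
  have kb: "\<And>k. k < r div s \<Longrightarrow> k*s + s \<le> r"
  proof -
    fix k assume "k < r div s"
    hence "Suc k * s \<le> (r div s) * s" by (intro mult_le_mono1) simp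
    moreover have "r div s * s \<le> r" by (rule div_times_less_eq_dividend)
    moreover have "k*s+s = Suc k * s" by simp
    ultimately show "k*s + s \<le> r" by linarith
  qed
  from bad lx ly obtain h where h: "h \<in> {1..s}" and
    nh: "\<not>(\<exists>i j. i + s \<le> r \<and> j + s \<le> r \<and>
        window x i s = unit_vec s h \<and> window x j s = zero_vec s \<and>
        window y i s = zero_vec s \<and> window y j s = unit_vec s h)"
    unfolding s_good_def by auto
  hence "(\<forall>i. i + s \<le> r \<longrightarrow> \<not>(window x i s = unit_vec s h \<and> window y i s = zero_vec s))
      \<or> (\<forall>j. j + s \<le> r \<longrightarrow> \<not>(window x j s = zero_vec s \<and> window y j s = unit_vec s h))"
    by blast
  hence "z \<in> S s (unit_vec s h) (zero_vec s) (r mod s) (r div s)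
         \<union> S s (zero_vec s) (unit_vec s h) (r mod s) (r div s)"
  proof
    assume A: "\<forall>i. i + s \<le> r \<longrightarrow> \<not>(window x i s = unit_vec s h \<and> window y i s = zero_vec s)"
    have "z \<in> S s (unit_vec s h) (zero_vec s) (r mod s) (r div s)"
      unfolding S_def xy using lx ly r A kb by auto
    thus ?thesis by blast
  next
    assume A: "\<forall>j. j + s \<le> r \<longrightarrow> \<not>(window x j s = zero_vec s \<and> window y j s = unit_vec s h)"
    have "z \<in> S s (zero_vec s) (unit_vec s h) (r mod s) (r div s)"
      unfolding S_def xy using lx ly r A kb by auto
    thus ?thesis by blast
  qed
  thus "z \<in> (\<Union>h\<in>{1..s}. S s (unit_vec s h) (zero_vec s) (r mod s) (r div s)
         \<union> S s (zero_vec s) (unit_vec s h) (r mod s) (r div s))" using h by blast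
qed

lemma f_nat_bound:
  assumes "1 \<le> s"
  shows "f s r \<le> 2 * s * ((4^s-1)^(r div s) * 4^(r mod s))"
proof -
  let ?M = "(4^s-1)^(r div s) * 4^(r mod s) :: nat"
  let ?U = "(\<Union>h\<in>{1..s}. S s (unit_vec s h) (zero_vec s) (r mod s) (r div s)
         \<union> S s (zero_vec s) (unit_vec s h) (r mod s) (r div s))"
  have lu: "length (unit_vec s h) = s" for h by (simp add: unit_vec_def)
  have lz: "length (zero_vec s) = s" by (simp add: zero_vec_def)
  have "f s r \<le> card ?U" unfolding f_def
    by (intro card_mono bad_sub assms) (auto intro!: finite_UN_I simp: S_finite)
  also have "\<dots> \<le> (\<Sum>h\<in>{1..s}. card (S s (unit_vec s h) (zero_vec s) (r mod s) (r div s)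
         \<union> S s (zero_vec s) (unit_vec s h) (r mod s) (r div s)))"
    by (rule card_UN_le) simp
  also have "\<dots> \<le> (\<Sum>h\<in>{1..s}. 2 * ?M)"
  proof (rule sum_mono)
    fix h
    have "card (S s (unit_vec s h) (zero_vec s) (r mod s) (r div s)
         \<union> S s (zero_vec s) (unit_vec s h) (r mod s) (r div s))
       \<le> card (S s (unit_vec s h) (zero_vec s) (r mod s) (r div s))
         + card (S s (zero_vec s) (unit_vec s h) (r mod s) (r div s))" by (rule card_Un_le)
    also have "\<dots> \<le> ?M + ?M" using block_count[OF lu lz] block_count[OF lz lu]
      by (intro add_mono) auto
    finally show "card (S s (unit_vec s h) (zero_vec s) (r mod s) (r div s)
         \<union> S s (zero_vec s) (unit_vec s h) (r mod s) (r div s)) \<le> 2 * ?M" by simp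
  qed
  also have "\<dots> = 2 * s * ?M" by simp
  finally show ?thesis .
qed

theorem lemma3:
  fixes s r :: nat
  assumes "1 \<le> s" and "s \<le> r"
  shows "real (f s r) \<le> 2 * real s * 4 ^ (s - 1) * ((4 ^ s - 1) powr (1 / real s)) powr real r"
proof -
  define q where "q = r div s"
  define t where "t = r mod s"
  define c :: real where "c = 4^s - 1"
  have "t < s" unfolding t_def using assms(1) by simp
  hence ts: "t \<le> s - 1" by simp
  have c1: "c \<ge> 1"
  proof -
    have "(4::real)^s \<ge> 4^1" by (rule power_increasing) (use assms in auto)
    thus ?thesis unfolding c_def by simp
  qed
  have cn: "real (4^s - 1 :: nat) = c" unfolding c_def
    by (simp add: of_nat_diff)
  have "real (f s r) \<le> real (2 * s * ((4^s-1)^q * 4^t))"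
    using f_nat_bound[OF assms(1), of r] unfolding q_def t_def of_nat_le_iff .
  also have "\<dots> = 2 * real s * (c^q * 4^t)" using cn by simp
  also have "\<dots> \<le> 2 * real s * (4 ^ (s - 1) * (c powr (1 / real s)) powr real r)"
  proof -
    have sp: "real s > 0" using assms by simp
    have rr: "real r = real q * real s + real t" unfolding q_def t_def
      by (metis of_nat_add of_nat_mult div_mult_mod_eq)
    have "(c powr (1 / real s)) powr real r = c powr (real r / real s)"
      by (simp add: powr_powr)
    also have "real r / real s = real q + real t / real s" using rr sp by (simp add: field_simps)
    also have "c powr (real q + real t / real s) = c ^ q * c powr (real t / real s)"
      using c1 by (simp add: powr_add powr_realpow)
    finally have e: "(c powr (1 / real s)) powr real r = c ^ q * c powr (real t / real s)" .
    have g1: "c powr (real t / real s) \<ge> 1" using c1 by (intro ge_one_powr_ge_zero) auto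
    have p4: "(4::real)^t \<le> 4^(s-1)" using ts by (intro power_increasing) auto
    have cq: "c^q \<ge> 0" using c1 by simp
    have "c^q * 4^t \<le> c^q * 4^(s-1)" using p4 cq by (rule mult_left_mono)
    also have "\<dots> \<le> c^q * 4^(s-1) * c powr (real t / real s)"
      using mult_left_mono[OF g1, of "c^q*4^(s-1)"] cq by simp
    finally have "c^q * 4^t \<le> 4 ^ (s - 1) * (c powr (1 / real s)) powr real r"
      unfolding e by (simp add: ac_simps)
    thus ?thesis using sp by (intro mult_left_mono) auto
  qed
  finally show ?thesis unfolding c_def by (simp add: ac_simps)
qed

end
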